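(* Let $\mathbb{K}$ be either $\mathbb{R}$ or $\mathbb{C}$, with all coefficients and solutions in $\mathbb{K}$. Let $D$ be a positive integer and $1\le D<q\le\infty$. For $k\in\{1,\dots,D\}$ let $\mathcal{D}_k=\{(d_1,\dots,d_k)\in\mathbb{N}^k: d_1+\cdots+d_k\le D\}$. Let $I$ be an infinite set. For all $i\in I$ and $d\in\{1,\dots,D\}$ let $\mathbf{a}_{i,d}=(a_{i,d,j})_{j=1}^\infty\in\ell^{q/(q-d)}$, $(\mathbf{a}_{i,d},\mathbf{x}^d)=\sum_{j=1}^\infty a_{i,d,j}x_j^d$, and \[ P_i(\mathbf{x})=\sum_{k=1}^D\sum_{(d_1,\dots,d_k)\in\mathcal{D}_k}(\mathbf{a}_{i,d_1},\mathbf{x}^{d_1})\cdots(\mathbf{a}_{i,d_k},\mathbf{x}^{d_k}). \] Let $\mathbf{b}=(b_i)_{i\in I}$ with $b_i\in\mathbb{K}$, and let $\mathbf{m}=(m_j)_{j=1}^\infty\in\ell^q$ with $m_j\ge 0$ for all $j\in\mathbb{N}$. If for every $\varepsilon>0$ and every finite subset $S$ of $I$ the finite set of inequalities $\{|P_i(\mathbf{x})-b_i|\le\varepsilon : i\in S\}$ has a solution $\mathbf{x}_{S,\varepsilon}=(x_{S,\varepsilon,j})_{j=1}^\infty\in\ell^q$ with $|x_{S,\varepsilon,j}|\le m_j$ for all $j\in\mathbb{N}$, then the infinite set of equations $\{P_i(\mathbf{x})=b_i : i\in I\}$ has an exact solution $\mathbf{x}=(x_j)_{j=1}^\infty\in\ell^q$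 with $|x_j|\le m_j$ for all $j\in\mathbb{N}$.
   Context: $\mathbb{N}=\{1,2,3,\dots\}$. For $q=\infty$ one sets $q/(q-d)=1$. $\ell^p$ ($1\le p<\infty$) denotes sequences with $\|\mathbf{a}\|_p=(\sum_j|a_j|^p)^{1/p}<\infty$, and $\ell^\infty$ bounded sequences with the sup norm; $\mathbf{x}^d=(x_j^d)_{j\ge1}$. For $\mathbf{x}\in\ell^q$ each series $(\mathbf{a}_{i,d},\mathbf{x}^d)$ converges absolutely by Hölder's inequality. $P_i$ is the multiplicative polynomial $\sum_{k}\sum_{\Delta\in\mathcal{D}_k}\sum_{J\in\mathbb{N}^k}a_{i,\Delta,J}x_J^\Delta$ with coefficients $a_{i,(d_1,\dots,d_k),(j_1,\dots,j_k)}=a_{i,d_1,j_1}\cdots a_{i,d_k,j_k}$. *)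

theory Defs
  imports "HOL-Analysis.Analysis"
begin

text \<open>Membership in the sequence space ell^p, for an extended real exponent p in [1,\<infinity>].
  Sequences are indexed by nat starting at 0 (a harmless shift of the index set N = {1,2,...}).\<close>
definition in_lp :: "ereal \<Rightarrow> (nat \<Rightarrow> 'a::real_normed_vector) \<Rightarrow> bool" where
  "in_lp p x = (if p = \<infinity> then bounded (range x)
                else summable (\<lambda>j. norm (x j) powr real_of_ereal p))"

definition exp_qd :: "ereal \<Rightarrow> nat \<Rightarrow> ereal" where
  "exp_qd q d = (if q = \<infinity> then 1 else ereal (real_of_ereal q / (real_of_ereal q - real d)))"

definition pairing :: "(nat \<Rightarrow> 'a::{real_normed_field}) \<Rightarrow> nat \<Rightarrow> (nat \<Rightarrow> 'a) \<Rightarrow> 'a" where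
  "pairing a d x = (\<Sum>j. a j * x j ^ d)"

definition Dset :: "nat \<Rightarrow> nat \<Rightarrow> nat list set" where
  "Dset D k = {ds. length ds = k \<and> (\<forall>d\<in>set ds. 1 \<le> d) \<and> sum_list ds \<le> D}"

definition Ppoly :: "nat \<Rightarrow> (nat \<Rightarrow> nat \<Rightarrow> 'a::real_normed_field) \<Rightarrow> (nat \<Rightarrow> 'a) \<Rightarrow> 'a" where
  "Ppoly D a x = (\<Sum>k\<in>{1..D}. \<Sum>ds\<in>Dset D k. prod_list (map (\<lambda>d. pairing (a d) d x) ds))"

end

theory Submission
  imports Defs
begin

lemma K_compact:
  fixes m :: "nat \<Rightarrow> real"
  shows "compact {x::nat \<Rightarrow> 'a::{real_normed_vector,heine_borel}. \<forall>j. norm (x j) \<le> m j}"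
proof -
  have eq: "{x::nat \<Rightarrow> 'a. \<forall>j. norm (x j) \<le> m j} = PiE UNIV (\<lambda>j. cball 0 (m j))"
    by (auto simp: PiE_iff)
  have "compactin (product_topology (\<lambda>j. euclidean) UNIV) (PiE UNIV (\<lambda>j. cball (0::'a) (m j)))"
    by (simp add: compactin_PiE)
  then show ?thesis unfolding eq euclidean_product_topology by simp
qed

lemma young_bound:
  fixes u v p r :: real
  assumes "p > 1" "r > 1" "1/p + 1/r = 1" "u \<ge> 0" "v \<ge> 0"
  shows "u * v \<le> u powr p + v powr r"
proof -
  have "u * v \<le> u powr p / p + v powr r / r" by (rule Youngs_inequality) (use assms in auto)
  also have "u powr p / p \<le> u powr p"
    using assms mult_left_mono[of 1 p "u powr p"] by (simp add: divide_le_eq)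
  also have "v powr r / r \<le> v powr r"
    using assms mult_left_mono[of 1 r "v powr r"] by (simp add: divide_le_eq)
  finally show ?thesis by simp
qed

lemma holder_summ:
  fixes a :: "nat \<Rightarrow> 'a::real_normed_vector"
  assumes a: "in_lp (exp_qd q d) a" and mq: "in_lp q m" and m0: "\<forall>j. 0 \<le> m j"
    and d1: "1 \<le> d" and dq: "ereal (real d) < q"
  shows "summable (\<lambda>j. norm (a j) * m j ^ d)"
proof (cases "q = \<infinity>")
  case True
  then have "summable (\<lambda>j. norm (a j) powr 1)" using a by (simp add: in_lp_def exp_qd_def)
  then have sa: "summable (\<lambda>j. norm (a j))" by simp
  from True mq have "bounded (range m)" by (simp add: in_lp_def)
  then obtain B where B: "\<And>j. norm (m j) \<le> B" by (auto simp: bounded_iff)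
  show ?thesis
  proof (rule summable_comparison_test')
    show "summable (\<lambda>j. norm (a j) * B ^ d)" using sa by (rule summable_mult2)
    fix j
    have "m j ^ d \<le> B ^ d" using B[of j] m0 by (intro power_mono) auto
    then show "norm (norm (a j) * m j ^ d) \<le> norm (a j) * B ^ d"
      using m0 by (simp add: mult_left_mono)
  qed
next
  case False
  from dq False obtain Q where qQ: "q = ereal Q" by (cases q) auto
  have Qd: "real d < Q" using dq qQ by simp
  have d0: "real d \<ge> 1" using d1 by simp
  define p where "p = Q / (Q - real d)"
  define r where "r = Q / real d"
  have p1: "p > 1" unfolding p_def using Qd d0 by (simp add: field_simps)
  have r1: "r > 1" unfolding r_def using Qd d0 by (simp add: field_simps)
  have pr: "1/p + 1/r = 1" unfolding p_def r_def using Qd d0 by (simp add: field_simps)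
  have sa: "summable (\<lambda>j. norm (a j) powr p)" using a qQ by (simp add: in_lp_def exp_qd_def p_def)
  have sm: "summable (\<lambda>j. norm (m j) powr Q)" using mq qQ by (simp add: in_lp_def)
  have sm': "summable (\<lambda>j. m j powr Q)" using sm m0 by simp
  show ?thesis
  proof (rule summable_comparison_test')
    show "summable (\<lambda>j. norm (a j) powr p + m j powr Q)" using sa sm' by (rule summable_add)
    fix j
    have e: "(m j ^ d) powr r = m j powr Q"
    proof (cases "m j = 0")
      case True then show ?thesis using d1 by simp
    next
      case False
      then have "m j > 0" using m0 by (metis order_le_less)
      then have "m j ^ d = m j powr real d" by (simp add: powr_realpow)
      then show ?thesis using d1
        by (simp add: powr_powr r_def)
    qed
    have "norm (a j) * m j ^ d \<le> norm (a j) powr p + (m j ^ d) powr r"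
      using m0 by (intro young_bound p1 r1 pr) auto
    then show "norm (norm (a j) * m j ^ d) \<le> norm (a j) powr p + m j powr Q"
      using m0 e by simp
  qed
qed

lemma cont_coord: "continuous_on A (\<lambda>x::nat \<Rightarrow> 'a::topological_space. x j)"
  by (rule continuous_on_subset[OF continuous_on_product_coordinates]) simp

lemma pairing_cont:
  fixes c :: "nat \<Rightarrow> 'a::{real_normed_field, banach}"
  assumes A: "\<And>x j. x \<in> A \<Longrightarrow> norm (x j) \<le> m j"
    and s: "summable (\<lambda>j. norm (c j) * m j ^ d)"
  shows "continuous_on A (\<lambda>x. pairing c d x)"
proof -
  have ul: "uniform_limit A (\<lambda>n x. \<Sum>i<n. c i * x i ^ d) (\<lambda>x. suminf (\<lambda>i. c i * x i ^ d)) sequentially"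
  proof (rule Weierstrass_m_test[OF _ s])
    fix n x assume "x \<in> A"
    then have "norm (x n) ^ d \<le> m n ^ d" using A by (intro power_mono) auto
    then show "norm (c n * x n ^ d) \<le> norm (c n) * m n ^ d"
      by (simp add: norm_mult norm_power mult_left_mono)
  qed
  have "continuous_on A (\<lambda>x. suminf (\<lambda>i. c i * x i ^ d))"
  proof (rule uniform_limit_theorem[OF _ ul])
    show "\<forall>\<^sub>F n in sequentially. continuous_on A (\<lambda>x. \<Sum>i<n. c i * x i ^ d)"
      by (intro always_eventually allI continuous_intros cont_coord)
  qed simp
  then show ?thesis unfolding pairing_def .
qed

lemma prod_list_cont:
  fixes f :: "nat \<Rightarrow> 'b::topological_space \<Rightarrow> 'a::real_normed_field"
  shows "(\<And>d. d \<in> set ds \<Longrightarrow> continuous_on A (f d)) \<Longrightarrow>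
     continuous_on A (\<lambda>x. prod_list (map (\<lambda>d. f d x) ds))"
  by (induction ds) (auto intro!: continuous_intros)

theorem theorem5:
  fixes D :: nat and q :: ereal and I :: "'i set"
    and a :: "'i \<Rightarrow> nat \<Rightarrow> nat \<Rightarrow> 'a::{real_normed_field, banach, heine_borel}"
    and b :: "'i \<Rightarrow> 'a" and m :: "nat \<Rightarrow> real"
  assumes D_pos: "1 \<le> D"
    and q_gt: "ereal (real D) < q"
    and I_inf: "infinite I"
    and a_lp: "\<forall>i\<in>I. \<forall>d\<in>{1..D}. in_lp (exp_qd q d) (a i d)"
    and m_lp: "in_lp q m"
    and m_nonneg: "\<forall>j. 0 \<le> m j"
    and approx: "\<forall>\<epsilon>>0. \<forall>S. finite S \<and> S \<subseteq> I \<longrightarrow>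
        (\<exists>x. in_lp q x \<and> (\<forall>j. norm (x j) \<le> m j) \<and>
             (\<forall>i\<in>S. norm (Ppoly D (a i) x - b i) \<le> \<epsilon>))"
  shows "\<exists>x. in_lp q x \<and> (\<forall>j. norm (x j) \<le> m j) \<and> (\<forall>i\<in>I. Ppoly D (a i) x = b i)"
proof -
  define K where "K = {x::nat \<Rightarrow> 'a. \<forall>j. norm (x j) \<le> m j}"
  have cK: "compact K" unfolding K_def by (rule K_compact)
  have clK: "closed K" using cK by (rule compact_imp_closed)
  have contP: "continuous_on K (Ppoly D (a i))" if i: "i \<in> I" for i
  proof -
    have pc: "continuous_on K (\<lambda>x. pairing (a i d) d x)" if d: "1 \<le> d" "d \<le> D" for d
    proof (rule pairing_cont)
      show "\<And>x j. x \<in> K \<Longrightarrow> norm (x j) \<le> m j" unfolding K_def by auto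
      have "ereal (real d) < q" using q_gt d by (meson ereal_less_eq(3) of_nat_le_iff order_le_less_trans)
      then show "summable (\<lambda>j. norm (a i d j) * m j ^ d)"
        using a_lp i d m_lp m_nonneg by (intro holder_summ) auto
    qed
    have "continuous_on K (\<lambda>x. \<Sum>k\<in>{1..D}. \<Sum>ds\<in>Dset D k. prod_list (map (\<lambda>d. pairing (a i d) d x) ds))"
    proof (intro continuous_on_sum prod_list_cont)
      fix k ds d assume "ds \<in> Dset D k" "d \<in> set ds"
      then have "1 \<le> d" "d \<le> D" unfolding Dset_def
        using member_le_sum_list[of d ds] by auto
      then show "continuous_on K (\<lambda>x. pairing (a i d) d x)" by (rule pc)
    qed
    then show ?thesis unfolding Ppoly_def[abs_def] .
  qed
  define F where "F = (\<lambda>(i, n::nat). K \<inter> Ppoly D (a i) -` cball (b i) (1 / (real n + 1)))"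
  have "K \<inter> (\<Inter>z\<in>I \<times> UNIV. F z) \<noteq> {}"
  proof (rule compact_imp_fip_image[OF cK])
    fix z assume "z \<in> I \<times> (UNIV :: nat set)"
    then show "closed (F z)" unfolding F_def
      using contP clK by (auto intro!: continuous_closed_preimage)
  next
    fix I' assume fI: "finite I'" and sI: "I' \<subseteq> I \<times> (UNIV :: nat set)"
    define N where "N = Max (snd ` I')"
    have pos: "(1::real) / (real N + 1) > 0" by simp
    have fin: "finite (fst ` I') \<and> fst ` I' \<subseteq> I" using fI sI by auto
    have ex: "\<exists>x. in_lp q x \<and> (\<forall>j. norm (x j) \<le> m j) \<and>
             (\<forall>i\<in>fst ` I'. norm (Ppoly D (a i) x - b i) \<le> 1 / (real N + 1))"
      using mp[OF spec[OF mp[OF spec[OF approx, of "1 / (real N + 1)"] pos], of "fst ` I'"] fin] .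
    then obtain x where x: "\<forall>j. norm (x j) \<le> m j"
      "\<forall>i\<in>fst ` I'. norm (Ppoly D (a i) x - b i) \<le> 1 / (real N + 1)"
      by blast
    have "x \<in> K \<inter> (\<Inter>z\<in>I'. F z)"
    proof -
      have "x \<in> F z" if z: "z \<in> I'" for z
      proof -
        obtain i n where zin: "z = (i, n)" by (cases z)
        have "n \<in> snd ` I'" using z zin by force
        then have "n \<le> N" unfolding N_def using fI by (simp add: Max_ge)
        then have le: "1 / (real N + 1) \<le> 1 / (real n + 1)" by (simp add: frac_le)
        have "norm (Ppoly D (a i) x - b i) \<le> 1 / (real N + 1)" using x z zin by force
        then have "dist (b i) (Ppoly D (a i) x) \<le> 1 / (real n + 1)"
          using le by (simp add: dist_norm norm_minus_commute)
        then show ?thesis unfolding F_def zin K_def using x by auto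
      qed
      then show ?thesis using x unfolding K_def by auto
    qed
    then show "K \<inter> (\<Inter>z\<in>I'. F z) \<noteq> {}" by blast
  qed
  then obtain x where xK: "x \<in> K" and xF: "\<And>z. z \<in> I \<times> UNIV \<Longrightarrow> x \<in> F z" by blast
  have xm: "\<forall>j. norm (x j) \<le> m j" using xK unfolding K_def by auto
  have sol: "Ppoly D (a i) x = b i" if i: "i \<in> I" for i
  proof (rule ccontr)
    assume ne: "Ppoly D (a i) x \<noteq> b i"
    then have pos: "dist (b i) (Ppoly D (a i) x) > 0" by simp
    then obtain n where n: "inverse (real (Suc n)) < dist (b i) (Ppoly D (a i) x)"
      using reals_Archimedean by blast
    have "x \<in> F (i, n)" using xF i by auto
    then have "dist (b i) (Ppoly D (a i) x) \<le> 1 / (real n + 1)" unfolding F_def by auto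
    with n show False by (simp add: inverse_eq_divide add.commute)
  qed
  have lp: "in_lp q x"
  proof (cases "q = \<infinity>")
    case True
    then have "bounded (range m)" using m_lp by (simp add: in_lp_def)
    then obtain B where B: "\<And>j. norm (m j) \<le> B" by (auto simp: bounded_iff)
    have "norm (x j) \<le> B" for j
    proof -
      have "norm (x j) \<le> m j" using xm by blast
      also have "m j \<le> B" using B[of j] by (simp add: abs_le_iff)
      finally show ?thesis .
    qed
    then have "bounded (range x)" by (auto simp: bounded_iff)
    then show ?thesis using True by (simp add: in_lp_def)
  next
    case False
    from q_gt False obtain Q where qQ: "q = ereal Q" by (cases q) auto
    have Q0: "Q \<ge> 0" using q_gt qQ by simp
    have sm: "summable (\<lambda>j. norm (m j) powr Q)" using m_lp qQ by (simp add: in_lp_def)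
    have "summable (\<lambda>j. norm (x j) powr Q)"
    proof (rule summable_comparison_test'[OF sm])
      fix j
      show "norm (norm (x j) powr Q) \<le> norm (m j) powr Q"
        using xm m_nonneg Q0 by (simp add: powr_mono2)
    qed
    then show ?thesis using qQ by (simp add: in_lp_def)
  qed
  show ?thesis using lp xm sol by blast
qed

end
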